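(* $hf(\mathcal{B})=\{v\}$.
   Context: A point $x$ of a space $X$ is homotopically fixed in $X$ if $h_t(x)=x$ for all $t$ for every homotopy $h_t:X\to X$ with $h_0=\mathrm{id}_X$; $hf(X)$ denotes the set of homotopically fixed points of $X$. The double broom $\mathcal{B}\subset\mathbb{R}^2$: let $v=(0,0)$, $a_0=(0,1)$, $b_0=(0,-1)$, $a_n=(1/n,0)$, $b_n=(-1/n,0)$ for $n\ge1$; let $J_{a_0}=[v,a_0]$, $J_{b_0}=[v,b_0]$, $J_{a_n}=[a_n,a_0]$, $J_{b_n}=[b_n,b_0]$ (straight segments), $A=J_{a_0}\cup\bigcup_{n\ge1}J_{a_n}$, $B=J_{b_0}\cup\bigcup_{n\ge1}J_{b_n}$, and $\mathcal{B}=A\cup B$. *)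

theory Defs
  imports "HOL-Analysis.Analysis"
begin

definition hf :: "'a::topological_space set \<Rightarrow> 'a set" where
  "hf X = {x \<in> X. \<forall>h :: real \<times> 'a \<Rightarrow> 'a.
      continuous_on ({0..1} \<times> X) h \<and> h ` ({0..1} \<times> X) \<subseteq> X \<and> (\<forall>y\<in>X. h (0, y) = y)
      \<longrightarrow> (\<forall>t\<in>{0..1}. h (t, x) = x)}"

definition bv :: "real \<times> real" where "bv = (0, 0)"
definition ba :: "nat \<Rightarrow> real \<times> real" where
  "ba n = (if n = 0 then (0, 1) else (1 / real n, 0))"
definition bb :: "nat \<Rightarrow> real \<times> real" where
  "bb n = (if n = 0 then (0, -1) else (- 1 / real n, 0))"

definition broomA :: "(real \<times> real) set" where
  "broomA = closed_segment bv (ba 0) \<union> (\<Union>n\<in>{1..}. closed_segment (ba n) (ba 0))"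
definition broomB :: "(real \<times> real) set" where
  "broomB = closed_segment bv (bb 0) \<union> (\<Union>n\<in>{1..}. closed_segment (bb n) (bb 0))"
definition double_broom :: "(real \<times> real) set" where
  "double_broom = broomA \<union> broomB"

end

theory Submission
  imports Defs
begin


definition R0 :: "real set" where "R0 = insert 0 ((\<lambda>n. 1 / real n) ` {1..})"

lemma seg_pt: "p \<in> closed_segment a b \<longleftrightarrow> (\<exists>u. 0 \<le> u \<and> u \<le> 1 \<and> p = (1 - u) *\<^sub>R a + u *\<^sub>R b)"
  by (auto simp: closed_segment_def)

lemma charA: "p \<in> broomA \<longleftrightarrow> (\<exists>r\<in>R0. 0 \<le> snd p \<and> snd p \<le> 1 \<and> fst p = r * (1 - snd p))"
proof
  assume "p \<in> broomA"
  then consider "p \<in> closed_segment bv (ba 0)" | n where "n \<ge> 1" "p \<in> closed_segment (ba n) (ba 0)"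
    unfolding broomA_def by auto
  then show "\<exists>r\<in>R0. 0 \<le> snd p \<and> snd p \<le> 1 \<and> fst p = r * (1 - snd p)"
  proof cases
    case 1 then obtain u where "0 \<le> u" "u \<le> 1" "p = (1 - u) *\<^sub>R bv + u *\<^sub>R ba 0" by (auto simp: seg_pt)
    then show ?thesis by (intro bexI[of _ 0]) (auto simp: bv_def ba_def R0_def)
  next
    case 2 then obtain u where "0 \<le> u" "u \<le> 1" "p = (1 - u) *\<^sub>R ba n + u *\<^sub>R ba 0" by (auto simp: seg_pt)
    then show ?thesis using 2 by (intro bexI[of _ "1 / real n"]) (auto simp: ba_def R0_def)
  qed
next
  assume "\<exists>r\<in>R0. 0 \<le> snd p \<and> snd p \<le> 1 \<and> fst p = r * (1 - snd p)"
  then obtain r where r: "r \<in> R0" "0 \<le> snd p" "snd p \<le> 1" "fst p = r * (1 - snd p)" by blast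
  show "p \<in> broomA"
  proof (cases "r = 0")
    case True
    then have "p = (1 - snd p) *\<^sub>R bv + snd p *\<^sub>R ba 0" using r by (auto simp: bv_def ba_def prod_eq_iff)
    then have "p \<in> closed_segment bv (ba 0)" using r unfolding seg_pt by blast
    then show ?thesis unfolding broomA_def by blast
  next
    case False
    then obtain n where n: "n \<ge> 1" "r = 1 / real n" using r(1) by (auto simp: R0_def)
    then have "p = (1 - snd p) *\<^sub>R ba n + snd p *\<^sub>R ba 0" using r by (auto simp: ba_def prod_eq_iff)
    then have "p \<in> closed_segment (ba n) (ba 0)" using r unfolding seg_pt by blast
    then show ?thesis unfolding broomA_def using n by blast
  qed
qed

lemma negA: "p \<in> broomB \<longleftrightarrow> - p \<in> broomA"
proof -
  have e1: "closed_segment bv (bb 0) = uminus ` closed_segment bv (ba 0)"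
   and e2: "\<And>n. closed_segment (bb n) (bb 0) = uminus ` closed_segment (ba n) (ba 0)"
  proof -
    have b: "\<And>n. bb n = - ba n" and v: "bv = - bv" by (auto simp: ba_def bb_def bv_def)
    have l: "linear (uminus :: real \<times> real \<Rightarrow> _)" by (rule linear_uminus)
    show "closed_segment bv (bb 0) = uminus ` closed_segment bv (ba 0)"
      by (subst b, subst v, subst closed_segment_linear_image[OF l]) (simp add: bv_def)
    show "\<And>n. closed_segment (bb n) (bb 0) = uminus ` closed_segment (ba n) (ba 0)"
      by (subst b, subst b, rule closed_segment_linear_image[OF l])
  qed
  have "broomB = uminus ` broomA" unfolding broomA_def broomB_def e1 e2 image_Un image_UN by simp
  then show ?thesis by (metis (no_types, lifting) add.inverse_inverse image_iff)
qed

lemma charB: "p \<in> broomB \<longleftrightarrow> (\<exists>r\<in>R0. -1 \<le> snd p \<and> snd p \<le> 0 \<and> fst p = - r * (1 + snd p))"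
  unfolding negA charA by (auto, metis add.inverse_inverse)

lemma negX: "p \<in> double_broom \<longleftrightarrow> - p \<in> double_broom"
  unfolding double_broom_def using negA by (metis add.inverse_inverse Un_iff)

lemma R0_ge: "r \<in> R0 \<Longrightarrow> 0 \<le> r \<and> r \<le> 1"
  by (auto simp: R0_def)


lemma A_quad: "p \<in> broomA \<Longrightarrow> 0 \<le> fst p \<and> 0 \<le> snd p"
  unfolding charA using R0_ge by auto

lemma B_quad: "p \<in> broomB \<Longrightarrow> fst p \<le> 0 \<and> snd p \<le> 0"
  unfolding charB using R0_ge by (auto simp: mult_nonneg_nonneg)

lemma bv_A: "bv \<in> broomA"
  unfolding charA by (auto simp: bv_def R0_def)

lemma B_quadA: "p \<in> broomB \<Longrightarrow> 0 \<le> fst p \<Longrightarrow> 0 \<le> snd p \<Longrightarrow> p = bv"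
  unfolding charB using R0_ge by (auto simp: bv_def prod_eq_iff) (meson antisym)

lemma move_lemma:
  fixes H :: "real \<times> real \<times> real \<Rightarrow> real \<times> real"
  assumes cont: "continuous_on ({0..1} \<times> broomA) H"
    and img: "H ` ({0..1} \<times> broomA) \<subseteq> broomA"
    and h0: "\<forall>p\<in>broomA. H (0, p) = p"
    and hv: "\<forall>t\<in>{0..1}. H (t, bv) = bv"
    and t1: "t1 \<in> {0..1}" and x: "x \<in> broomA" and mv: "H (t1, x) \<noteq> x"
  shows "x \<notin> hf double_broom"
proof
  assume xh: "x \<in> hf double_broom"
  define P where "P q \<longleftrightarrow> 0 \<le> fst (snd q) \<and> 0 \<le> snd (snd q)" for q :: "real \<times> real \<times> real"
  define h where "h q = (if P q then H q else snd q)" for q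
  define D where "D = {0..1::real} \<times> double_broom"
  define S where "S = D \<inter> {q. 0 \<le> fst (snd q) \<and> 0 \<le> snd (snd q)}"
  define T where "T = D \<inter> {q. fst (snd q) \<le> 0 \<and> snd (snd q) \<le> 0}"
  have SA: "S = {0..1} \<times> broomA"
    unfolding S_def D_def double_broom_def using A_quad B_quadA bv_A by fastforce
  have DST: "D = S \<union> T"
    unfolding S_def T_def D_def double_broom_def using A_quad B_quad by auto
  have cS: "closedin (top_of_set D) S" unfolding S_def
    by (intro closedin_closed_Int closed_Collect_conj closed_Collect_le continuous_intros)
  have cT: "closedin (top_of_set D) T" unfolding T_def
    by (intro closedin_closed_Int closed_Collect_conj closed_Collect_le continuous_intros)
  have "continuous_on (S \<union> T) (\<lambda>q. if P q then H q else snd q)"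
  proof (rule continuous_on_cases_local)
    show "closedin (top_of_set (S \<union> T)) S" "closedin (top_of_set (S \<union> T)) T" using cS cT DST by auto
    show "continuous_on S H" using cont SA by simp
    show "continuous_on T snd" by (intro continuous_intros)
    fix q assume "q \<in> S \<and> \<not> P q \<or> q \<in> T \<and> P q"
    then show "H q = snd q"
    proof
      assume "q \<in> S \<and> \<not> P q" then show ?thesis by (auto simp: S_def P_def)
    next
      assume q: "q \<in> T \<and> P q"
      then have "snd q = bv" by (auto simp: T_def P_def bv_def prod_eq_iff)
      moreover have "fst q \<in> {0..1}" using q by (auto simp: T_def D_def)
      ultimately show ?thesis using hv by (metis prod.collapse)
    qed
  qed
  then have hc: "continuous_on D h" using DST h_def by (simp add: fun_eq_iff)
  have hA: "\<And>t p. t \<in> {0..1} \<Longrightarrow> p \<in> broomA \<Longrightarrow> h (t, p) = H (t, p)"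
    using A_quad by (auto simp: h_def P_def)
  have hi: "h ` D \<subseteq> double_broom"
  proof
    fix y assume "y \<in> h ` D"
    then obtain q where q: "q \<in> D" "y = h q" by blast
    show "y \<in> double_broom"
    proof (cases "P q")
      case True
      then have "q \<in> S" using q by (auto simp: S_def P_def)
      then show ?thesis using img SA q True by (auto simp: h_def double_broom_def)
    next
      case False then show ?thesis using q by (auto simp: h_def D_def)
    qed
  qed
  have h00: "\<forall>y\<in>double_broom. h (0, y) = y"
  proof
    fix y assume y: "y \<in> double_broom"
    show "h (0, y) = y"
    proof (cases "P (0, y)")
      case True
      then have "y \<in> broomA" using y B_quadA[of y] bv_A by (auto simp: P_def double_broom_def)
      then show ?thesis using h0 True by (auto simp: h_def)
    qed (auto simp: h_def)
  qed
  have "\<forall>t\<in>{0..1}. h (t, x) = x"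
    using xh hc hi h00 unfolding hf_def D_def by blast
  then show False using hA[OF t1 x] t1 mv by auto
qed


definition star :: "real \<times> real \<times> real \<Rightarrow> real \<times> real" where
  "star q = (let t = fst q; x = fst (snd q); y = snd (snd q); l = 1 - t * (x + y)
             in (l * x, 1 - l * (1 - y)))"

definition apex :: "real \<times> real \<times> real \<Rightarrow> real \<times> real" where
  "apex q = (let t = fst q; x = fst (snd q); y = snd (snd q); f = 1 - 2 * t * y
             in (x * max 0 f, 1 - ((1 - y) * max 0 f + max 0 (- f) / 2)))"

lemma star_cont: "continuous_on S star"
  unfolding star_def Let_def by (intro continuous_intros)

lemma apex_cont: "continuous_on S apex"
  unfolding apex_def Let_def by (intro continuous_intros) auto

lemma star_img: "star ` ({0..1} \<times> broomA) \<subseteq> broomA"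
proof (rule image_subsetI)
  fix q assume "q \<in> {0..1::real} \<times> broomA"
  then obtain t x y where qq: "q = (t, x, y)" and t: "t \<in> {0..1}" and p: "(x, y) \<in> broomA"
    by (metis mem_Times_iff prod.collapse)
  show "star q \<in> broomA" unfolding qq
  proof -
  obtain r where r: "r \<in> R0" "0 \<le> y" "y \<le> 1" "x = r * (1 - y)" using p unfolding charA by auto
  have r01: "0 \<le> r" "r \<le> 1" using R0_ge r(1) by auto
  define l where "l = 1 - t * (x + y)"
  have "r * (1 - y) \<le> 1 - y" using r r01 by (simp add: mult_left_le_one_le)
  then have "x + y \<le> 1" using r by simp
  moreover have "0 \<le> x" using r r01 by simp
  ultimately have l: "0 \<le> l" "l \<le> 1" using t r unfolding l_def
    by (auto simp: mult_left_le_one_le mult_le_one)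
  have "star (t, x, y) = (l * x, 1 - l * (1 - y))" by (simp add: star_def l_def Let_def)
  moreover have "(l * x, 1 - l * (1 - y)) \<in> broomA" unfolding charA
  proof (intro bexI[of _ r] conjI)
    have "l * (1 - y) \<le> 1" using r l by (intro mult_le_one) auto
    moreover have "0 \<le> l * (1 - y)" using r l by simp
    ultimately show "0 \<le> snd (l * x, 1 - l * (1 - y))" "snd (l * x, 1 - l * (1 - y)) \<le> 1" by auto
    show "fst (l * x, 1 - l * (1 - y)) = r * (1 - snd (l * x, 1 - l * (1 - y)))" using r(4) by simp
  qed (use r in auto)
  ultimately show "star (t, x, y) \<in> broomA" by simp
qed
qed

lemma apex_img: "apex ` ({0..1} \<times> broomA) \<subseteq> broomA"
proof (rule image_subsetI)
  fix q assume "q \<in> {0..1::real} \<times> broomA"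
  then obtain t x y where qq: "q = (t, x, y)" and t: "t \<in> {0..1}" and p: "(x, y) \<in> broomA"
    by (metis mem_Times_iff prod.collapse)
  show "apex q \<in> broomA" unfolding qq
  proof -
  obtain r where r: "r \<in> R0" "0 \<le> y" "y \<le> 1" "x = r * (1 - y)" using p unfolding charA by auto
  define f where "f = 1 - 2 * t * y"
  have f: "-1 \<le> f" "f \<le> 1" using t r unfolding f_def by (auto simp: mult_le_one)
  have e: "apex (t, x, y) = (x * max 0 f, 1 - ((1 - y) * max 0 f + max 0 (- f) / 2))"
    by (simp add: apex_def f_def Let_def)
  show "apex (t, x, y) \<in> broomA"
  proof (cases "0 \<le> f")
    case True
    then have "apex (t, x, y) = (x * f, 1 - (1 - y) * f)" using e by simp
    moreover have "(x * f, 1 - (1 - y) * f) \<in> broomA" unfolding charA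
    proof (intro bexI[of _ r] conjI)
      have "(1 - y) * f \<le> 1" using r f True by (intro mult_le_one) auto
      moreover have "0 \<le> (1 - y) * f" using r True by simp
      ultimately show "0 \<le> snd (x * f, 1 - (1 - y) * f)" "snd (x * f, 1 - (1 - y) * f) \<le> 1" by auto
      show "fst (x * f, 1 - (1 - y) * f) = r * (1 - snd (x * f, 1 - (1 - y) * f))" using r(4) by simp
    qed (use r in auto)
    ultimately show ?thesis by simp
  next
    case False
    then have "apex (t, x, y) = (0, 1 + f / 2)" using e by simp
    moreover have "(0, 1 + f / 2) \<in> broomA" unfolding charA using f False
      by (intro bexI[of _ 0]) (auto simp: R0_def)
    ultimately show ?thesis by simp
  qed
qed
qed

lemma A_not_hf: "x \<in> broomA \<Longrightarrow> x \<noteq> bv \<Longrightarrow> x \<notin> hf double_broom"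
proof (cases "x = ba 0")
  case True
  assume x: "x \<in> broomA"
  show ?thesis
  proof (rule move_lemma[OF apex_cont apex_img _ _ _ x])
    show "\<forall>p\<in>broomA. apex (0, p) = p" using charA by (auto simp: apex_def)
    show "\<forall>t\<in>{0..1}. apex (t, bv) = bv" by (auto simp: apex_def bv_def)
    show "(1::real) \<in> {0..1}" by simp
    show "apex (1, x) \<noteq> x" using True by (simp add: apex_def ba_def)
  qed
next
  case False
  assume x: "x \<in> broomA" and nv: "x \<noteq> bv"
  show ?thesis
  proof (rule move_lemma[OF star_cont star_img _ _ _ x])
    show "\<forall>p\<in>broomA. star (0, p) = p" by (auto simp: star_def)
    show "\<forall>t\<in>{0..1}. star (t, bv) = bv" by (auto simp: star_def bv_def)
    show "(1::real) \<in> {0..1}" by simp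
    obtain a b where ab: "x = (a, b)" by fastforce
    have q: "0 \<le> a" "0 \<le> b" using A_quad x ab by auto
    show "star (1, x) \<noteq> x"
    proof
      assume "star (1, x) = x"
      then have e1: "(1 - (a + b)) * a = a" and e2: "1 - (1 - (a + b)) * (1 - b) = b"
        by (auto simp: star_def ab Let_def)
      have "(a + b) * a = a - (1 - (a + b)) * a" "(a + b) * (1 - b) = (1 - (1 - (a + b)) * (1 - b)) - b"
        by (simp_all add: algebra_simps)
      then have "(a + b) * a = 0" "(a + b) * (1 - b) = 0" using e1 e2 by simp_all
      then have "a + b = 0 \<or> (a = 0 \<and> b = 1)" by auto
      then show False using q nv False ab by (auto simp: bv_def ba_def)
    qed
  qed
qed




definition homot :: "(real \<times> real \<times> real \<Rightarrow> real \<times> real) \<Rightarrow> bool" where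
  "homot h \<longleftrightarrow> continuous_on ({0..1} \<times> double_broom) h \<and> h ` ({0..1} \<times> double_broom) \<subseteq> double_broom
     \<and> (\<forall>y\<in>double_broom. h (0, y) = y)"

lemma ba_X: "n \<ge> 1 \<Longrightarrow> ba n \<in> double_broom"
proof -
  assume n: "n \<ge> 1"
  have "ba n \<in> broomA" unfolding charA using n by (intro bexI[of _ "1 / real n"]) (auto simp: ba_def R0_def)
  then show ?thesis unfolding double_broom_def by blast
qed

lemma bv_X: "bv \<in> double_broom"
  unfolding double_broom_def using bv_A by auto

lemma homot_neg: "homot h \<Longrightarrow> homot (\<lambda>q. - h (fst q, - snd q))"
  unfolding homot_def
proof (elim conjE, intro conjI)
  assume c: "continuous_on ({0..1} \<times> double_broom) h" and i: "h ` ({0..1} \<times> double_broom) \<subseteq> double_broom"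
    and z: "\<forall>y\<in>double_broom. h (0, y) = y"
  have sub: "(\<lambda>q. (fst q, - snd q)) ` ({0..1} \<times> double_broom) \<subseteq> {0..1} \<times> double_broom"
    using negX by auto
  show "continuous_on ({0..1} \<times> double_broom) (\<lambda>q. - h (fst q, - snd q))"
  proof -
    have "continuous_on ({0..1} \<times> double_broom) (\<lambda>q. h (fst q, - snd q))"
      by (rule continuous_on_compose2[OF c _ sub]) (intro continuous_intros)
    then show ?thesis by (rule continuous_on_minus)
  qed
  show "(\<lambda>q. - h (fst q, - snd q)) ` ({0..1} \<times> double_broom) \<subseteq> double_broom"
  proof (rule image_subsetI)
    fix q assume "q \<in> {0..1::real} \<times> double_broom"
    then have "(fst q, - snd q) \<in> {0..1} \<times> double_broom" using sub by blast
    then have "h (fst q, - snd q) \<in> double_broom" using i by blast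
    then show "- h (fst q, - snd q) \<in> double_broom" using negX by (metis add.inverse_inverse)
  qed
  show "\<forall>y\<in>double_broom. - h (fst (0, y), - snd (0, y)) = y"
    using z negX by (metis add.inverse_inverse fst_conv snd_conv)
qed

lemma unif:
  assumes "homot h" "0 < e"
  shows "\<exists>N\<ge>1. \<forall>n\<ge>N. \<forall>t\<in>{0..1}. dist (h (t, ba n)) (h (t, bv)) < e"
proof -
  define a where "a n = ba (Suc n)" for n
  have lim: "a \<longlonglongrightarrow> bv"
  proof -
    have "(\<lambda>n. (1 / real (Suc n), 0::real)) \<longlonglongrightarrow> (0, 0)"
      by (intro tendsto_Pair tendsto_const LIMSEQ_Suc[OF lim_1_over_n])
    moreover have "a = (\<lambda>n. (1 / real (Suc n), 0::real))" by (simp add: a_def ba_def fun_eq_iff)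
    ultimately show ?thesis by (simp add: bv_def)
  qed
  define K where "K = {0..1::real} \<times> insert bv (range a)"
  have "compact K" unfolding K_def by (intro compact_Times compact_Icc compact_sequence_with_limit lim)
  moreover have "K \<subseteq> {0..1} \<times> double_broom" unfolding K_def a_def using ba_X bv_X by auto
  ultimately have "uniformly_continuous_on K h"
    using assms(1) unfolding homot_def by (meson compact_uniformly_continuous continuous_on_subset)
  then obtain d where d: "d > 0" "\<And>x x'. x \<in> K \<Longrightarrow> x' \<in> K \<Longrightarrow> dist x' x < d \<Longrightarrow> dist (h x') (h x) < e"
    unfolding uniformly_continuous_on_def using assms(2) by metis
  obtain N :: nat where N: "inverse (real (Suc N)) < d" using d(1) reals_Archimedean by blast
  show ?thesis
  proof (intro exI[of _ "Suc N"] conjI allI impI ballI)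
    fix n t assume n: "n \<ge> Suc N" and t: "t \<in> {0..1::real}"
    have "ba n = a (n - 1)" using n by (simp add: a_def)
    then have "(t, ba n) \<in> K" "(t, bv) \<in> K" using t by (simp_all add: K_def)
    moreover have "dist (t, ba n) (t, bv) < d"
    proof -
      have "dist (t, ba n) (t, bv) = 1 / real n" using n by (simp add: dist_Pair_Pair ba_def bv_def dist_real_def)
      also have "\<dots> \<le> inverse (real (Suc N))" using n by (simp add: divide_simps)
      finally show ?thesis using N by simp
    qed
    ultimately show "dist (h (t, ba n)) (h (t, bv)) < e" using d(2) by blast
  qed simp
qed


lemma bv0: "bv = 0" by (simp add: bv_def prod_eq_iff)

lemma val_lemma:
  assumes p: "p \<in> double_broom" and sn: "\<bar>snd p\<bar> < 1" and n: "n \<ge> 1"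
    and v: "fst p / (1 - \<bar>snd p\<bar>) \<in> {1 / real (n + 1) <..< 2 / (2 * real n - 1)}"
  shows "fst p / (1 - \<bar>snd p\<bar>) = 1 / real n"
proof -
  have pos: "0 < fst p / (1 - \<bar>snd p\<bar>)" using v n
    by (metis greaterThanLessThan_iff less_trans of_nat_0_less_iff zero_less_Suc zero_less_divide_1_iff add.commute plus_1_eq_Suc)
  have "p \<in> broomA"
  proof (rule ccontr)
    assume "p \<notin> broomA"
    then have "p \<in> broomB" using p by (auto simp: double_broom_def)
    then have "fst p \<le> 0" using B_quad by auto
    moreover have "0 < 1 - \<bar>snd p\<bar>" using sn by simp
    ultimately have "fst p / (1 - \<bar>snd p\<bar>) \<le> 0" by (simp add: divide_nonpos_pos)
    then show False using pos by simp
  qed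
  then obtain r where r: "r \<in> R0" "0 \<le> snd p" "snd p \<le> 1" "fst p = r * (1 - snd p)" unfolding charA by auto
  have "1 - snd p > 0" using sn r by simp
  then have e: "fst p / (1 - \<bar>snd p\<bar>) = r" using r by simp
  then have "r \<noteq> 0" using pos by simp
  then obtain m where m: "m \<ge> 1" "r = 1 / real m" using r(1) by (auto simp: R0_def)
  have "1 / real (n + 1) < 1 / real m" using v e m by simp
  then have "real m < real (n + 1)" using m n by (simp add: divide_simps)
  moreover have "1 / real m < 2 / (2 * real n - 1)" using v e m by simp
  then have "2 * real n - 1 < 2 * real m" using m n by (simp add: divide_simps)
  ultimately have "m = n" by linarith
  then show ?thesis using e m by simp
qed

lemma path_lemma:
  assumes h: "homot h" and n: "n \<ge> 1" and s: "0 \<le> s" "s \<le> 1"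
    and d: "\<forall>t\<in>{0..s}. dist (h (t, ba n)) bv < 1" and t: "t \<in> {0..s}"
  shows "0 \<le> fst (h (t, ba n)) \<and> 0 \<le> snd (h (t, ba n))"
proof -
  define al where "al t = h (t, ba n)" for t
  define f where "f t = fst (al t) / (1 - \<bar>snd (al t)\<bar>)" for t
  have sub: "(\<lambda>t. (t, ba n)) ` {0..s} \<subseteq> {0..1} \<times> double_broom" using s ba_X[OF n] by auto
  have inX: "\<And>t. t \<in> {0..s} \<Longrightarrow> al t \<in> double_broom"
    using sub h unfolding homot_def al_def by blast
  have sn: "\<And>t. t \<in> {0..s} \<Longrightarrow> \<bar>snd (al t)\<bar> < 1"
  proof -
    fix t assume "t \<in> {0..s}"
    then have "dist (al t) bv < 1" using d al_def by simp
    moreover have "\<bar>snd (al t)\<bar> \<le> dist (al t) bv"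
      using norm_snd_le[of "snd (al t)" "fst (al t)"] by (simp add: bv0 dist_norm)
    ultimately show "\<bar>snd (al t)\<bar> < 1" by simp
  qed
  have hc: "continuous_on ({0..1} \<times> double_broom) h" using h unfolding homot_def by blast
  have cp: "continuous_on {0..s} (\<lambda>t. (t, ba n))"
    by (intro continuous_on_Pair continuous_on_id continuous_on_const)
  have ca: "continuous_on {0..s} al"
    unfolding al_def by (rule continuous_on_compose2[OF hc cp sub])
  have c1: "continuous_on {0..s} (\<lambda>t. fst (al t))" by (rule continuous_on_fst[OF ca])
  have c2: "continuous_on {0..s} (\<lambda>t. 1 - \<bar>snd (al t)\<bar>)"
    by (intro continuous_on_diff continuous_on_const continuous_on_rabs continuous_on_snd[OF ca])
  have cf: "continuous_on {0..s} f"
    unfolding f_def by (rule continuous_on_divide[OF c1 c2]) (use sn in force)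
  define I where "I = {1 / real (n + 1) <..< 2 / (2 * real n - 1)}"
  have "al 0 = ba n" using h ba_X[OF n] unfolding homot_def al_def by blast
  then have f0: "f 0 = 1 / real n" using n by (simp add: f_def ba_def)
  have "{x \<in> {0..s}. f x = 1 / real n} = {0..s} \<inter> f -` I"
  proof -
    have "1 / real (n + 1) < 1 / real n" using n by (simp add: divide_simps)
    moreover have "1 / real n < 2 / (2 * real n - 1)" using n by (simp add: divide_simps)
    ultimately have "1 / real n \<in> I" by (simp add: I_def)
    moreover have "\<And>x. x \<in> {0..s} \<Longrightarrow> f x \<in> I \<Longrightarrow> f x = 1 / real n"
    proof -
      fix x assume x: "x \<in> {0..s}" "f x \<in> I"
      show "f x = 1 / real n" unfolding f_def by (rule val_lemma[OF inX[OF x(1)] sn[OF x(1)] n]) (use x in \<open>simp add: f_def I_def\<close>)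
    qed
    ultimately show ?thesis by auto
  qed
  moreover have "openin (top_of_set {0..s}) ({0..s} \<inter> f -` I)"
    by (rule continuous_openin_preimage_gen[OF cf]) (simp add: I_def)
  ultimately have "openin (top_of_set {0..s}) {x \<in> {0..s}. f x = 1 / real n}" by simp
  moreover have "\<exists>x\<in>{0..s}. f x = 1 / real n" using f0 s by force
  ultimately have "\<forall>x\<in>{0..s}. f x = 1 / real n"
    using continuous_levelset_openin[OF connected_Icc cf] by blast
  then have ft: "f t = 1 / real n" using t by blast
  have "al t \<in> broomA"
  proof (rule ccontr)
    assume "al t \<notin> broomA"
    then have "al t \<in> broomB" using inX[OF t] by (auto simp: double_broom_def)
    then have "fst (al t) \<le> 0" using B_quad by auto
    moreover have "0 < 1 - \<bar>snd (al t)\<bar>" using sn[OF t] by simp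
    ultimately have "f t \<le> 0" unfolding f_def by (simp add: divide_nonpos_pos)
    then show False using ft n by simp
  qed
  then show ?thesis using A_quad al_def by simp
qed


lemma hf_alt: "x \<in> hf double_broom \<longleftrightarrow> x \<in> double_broom \<and> (\<forall>h. homot h \<longrightarrow> (\<forall>t\<in>{0..1}. h (t, x) = x))"
  unfolding hf_def homot_def by blast

lemma stay:
  assumes h: "homot h" and s: "0 \<le> s" "s \<le> 1"
    and d: "\<forall>t\<in>{0..s}. dist (h (t, bv)) bv < 1/2" and sig: "\<sigma> \<in> {0..s}"
  shows "h (\<sigma>, bv) = bv"
proof -
  define h' where "h' q = - h (fst q, - snd q)" for q
  have h': "homot h'" unfolding h'_def by (rule homot_neg[OF h])
  define g where "g = h (\<sigma>, bv)"
  have nbv: "- bv = bv" by (simp add: bv_def)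
  have key: "\<bar>fst g\<bar> < e \<and> \<bar>snd g\<bar> < e" if e: "0 < e" "e < 1/2" for e
  proof -
    obtain N1 where N1: "N1 \<ge> 1" "\<forall>n\<ge>N1. \<forall>t\<in>{0..1}. dist (h (t, ba n)) (h (t, bv)) < e"
      using unif[OF h e(1)] by blast
    obtain N2 where N2: "N2 \<ge> 1" "\<forall>n\<ge>N2. \<forall>t\<in>{0..1}. dist (h' (t, ba n)) (h' (t, bv)) < e"
      using unif[OF h' e(1)] by blast
    define n where "n = max N1 N2"
    have n: "n \<ge> 1" "n \<ge> N1" "n \<ge> N2" using N1 N2 by (auto simp: n_def)
    have u1: "\<And>t. t \<in> {0..s} \<Longrightarrow> dist (h (t, ba n)) (h (t, bv)) < e" using N1 n s by auto
    have u2: "\<And>t. t \<in> {0..s} \<Longrightarrow> dist (h' (t, ba n)) (h' (t, bv)) < e" using N2 n s by auto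
    have hv': "\<And>t. h' (t, bv) = - h (t, bv)" by (simp add: h'_def nbv)
    have dn: "\<And>x. dist (- x) bv = dist x (bv :: real \<times> real)" by (simp add: bv0 dist_norm)
    have d1: "\<forall>t\<in>{0..s}. dist (h (t, ba n)) bv < 1"
    proof
      fix t assume t: "t \<in> {0..s}"
      have "dist (h (t, ba n)) bv \<le> dist (h (t, ba n)) (h (t, bv)) + dist (h (t, bv)) bv" by (rule dist_triangle)
      then show "dist (h (t, ba n)) bv < 1" using u1[OF t] d t e by fastforce
    qed
    have d2: "\<forall>t\<in>{0..s}. dist (h' (t, ba n)) bv < 1"
    proof
      fix t assume t: "t \<in> {0..s}"
      have "dist (h' (t, ba n)) bv \<le> dist (h' (t, ba n)) (h' (t, bv)) + dist (h' (t, bv)) bv" by (rule dist_triangle)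
      moreover have "dist (h' (t, bv)) bv = dist (h (t, bv)) bv" using hv' dn by simp
      ultimately show "dist (h' (t, ba n)) bv < 1" using u2[OF t] d t e by fastforce
    qed
    have p1: "0 \<le> fst (h (\<sigma>, ba n)) \<and> 0 \<le> snd (h (\<sigma>, ba n))" by (rule path_lemma[OF h n(1) s d1 sig])
    have p2: "0 \<le> fst (h' (\<sigma>, ba n)) \<and> 0 \<le> snd (h' (\<sigma>, ba n))" by (rule path_lemma[OF h' n(1) s d2 sig])
    have q1: "dist (h (\<sigma>, ba n)) g < e" using u1[OF sig] g_def by simp
    have q2: "dist (h' (\<sigma>, ba n)) (- g) < e" using u2[OF sig] g_def hv' by simp
    have "dist (fst (h (\<sigma>, ba n))) (fst g) < e" "dist (snd (h (\<sigma>, ba n))) (snd g) < e"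
      using q1 dist_fst_le dist_snd_le le_less_trans by blast+
    moreover have "dist (fst (h' (\<sigma>, ba n))) (fst (- g)) < e" "dist (snd (h' (\<sigma>, ba n))) (snd (- g)) < e"
      using q2 dist_fst_le dist_snd_le le_less_trans by blast+
    ultimately show ?thesis using p1 p2 by (auto simp: dist_real_def)
  qed
  have z: "x = 0" if "\<And>e. 0 < e \<Longrightarrow> e < 1/2 \<Longrightarrow> \<bar>x\<bar> < e" for x :: real
  proof (rule ccontr)
    assume "x \<noteq> 0"
    then have "0 < min \<bar>x\<bar> (1/4)" "min \<bar>x\<bar> (1/4) < 1/2" by auto
    then have "\<bar>x\<bar> < min \<bar>x\<bar> (1/4)" using that by blast
    then show False by simp
  qed
  have "fst g = 0" by (rule z) (use key in blast)
  moreover have "snd g = 0" by (rule z) (use key in blast)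
  ultimately show ?thesis by (simp add: g_def bv_def prod_eq_iff)
qed

lemma v_fixed:
  assumes h: "homot h" and t: "t \<in> {0..1}"
  shows "h (t, bv) = bv"
proof (rule ccontr)
  assume nt: "h (t, bv) \<noteq> bv"
  define B where "B = {\<sigma> \<in> {0..1::real}. h (\<sigma>, bv) \<noteq> bv}"
  define t0 where "t0 = Inf B"
  have Bne: "B \<noteq> {}" using t nt by (auto simp: B_def)
  have bdd: "bdd_below B" by (rule bdd_belowI[of _ 0]) (auto simp: B_def)
  have t00: "0 \<le> t0" unfolding t0_def by (rule cInf_greatest[OF Bne]) (auto simp: B_def)
  have t01: "t0 \<le> 1" using cInf_lower[OF _ bdd, of t] t nt by (auto simp: B_def t0_def)
  have low: "\<And>\<sigma>. \<sigma> \<in> {0..1} \<Longrightarrow> \<sigma> < t0 \<Longrightarrow> h (\<sigma>, bv) = bv"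
    using cInf_lower[OF _ bdd] unfolding t0_def B_def by force
  have hc: "continuous_on ({0..1} \<times> double_broom) h" using h unfolding homot_def by blast
  have sub: "(\<lambda>t. (t, bv)) ` {0..1} \<subseteq> {0..1} \<times> double_broom" using bv_X by auto
  have cg: "continuous_on {0..1} (\<lambda>\<sigma>. h (\<sigma>, bv))"
    by (rule continuous_on_compose2[OF hc _ sub]) (intro continuous_on_Pair continuous_on_id continuous_on_const)
  have cgi: "\<And>e. e > 0 \<Longrightarrow> \<exists>d>0. \<forall>x'\<in>{0..1}. dist x' t0 < d \<longrightarrow> dist (h (x', bv)) (h (t0, bv)) < e"
    using cg t00 t01 unfolding continuous_on_iff by auto
  have h0: "h (0, bv) = bv" using h bv_X unfolding homot_def by blast
  have gt0: "h (t0, bv) = bv"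
  proof (rule ccontr)
    assume ne: "h (t0, bv) \<noteq> bv"
    then have "t0 \<noteq> 0" using h0 by auto
    then have tp: "t0 > 0" using t00 by simp
    obtain d where d: "d > 0" "\<forall>x'\<in>{0..1}. dist x' t0 < d \<longrightarrow> dist (h (x', bv)) (h (t0, bv)) < dist (h (t0, bv)) bv"
      using cgi[of "dist (h (t0, bv)) bv"] ne by auto
    define \<sigma> where "\<sigma> = max 0 (t0 - d/2)"
    have "\<sigma> \<in> {0..1}" "dist \<sigma> t0 < d" "\<sigma> < t0" using tp d t01 by (auto simp: \<sigma>_def dist_real_def)
    then have "dist (h (\<sigma>, bv)) (h (t0, bv)) < dist (h (t0, bv)) bv" "h (\<sigma>, bv) = bv" using d low by auto
    then show False by (simp add: dist_commute)
  qed
  obtain d where d: "d > 0" "\<forall>x'\<in>{0..1}. dist x' t0 < d \<longrightarrow> dist (h (x', bv)) bv < 1/2"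
    using cgi[of "1/2"] gt0 by auto
  define s where "s = min 1 (t0 + d/2)"
  have s: "0 \<le> s" "s \<le> 1" using t00 d by (auto simp: s_def)
  have ds: "\<forall>\<tau>\<in>{0..s}. dist (h (\<tau>, bv)) bv < 1/2"
  proof
    fix \<tau> assume tau: "\<tau> \<in> {0..s}"
    then have tau1: "\<tau> \<in> {0..1}" using s by auto
    show "dist (h (\<tau>, bv)) bv < 1/2"
    proof (cases "\<tau> < t0")
      case True then show ?thesis using low[OF tau1] by simp
    next
      case False
      then have "dist \<tau> t0 < d" using tau d by (auto simp: s_def dist_real_def)
      then show ?thesis using d tau1 by blast
    qed
  qed
  have "Inf B < t0 + d/2" using d by (simp add: t0_def)
  then obtain b where b: "b \<in> B" "b < t0 + d/2" using cInf_less_iff[OF Bne bdd] by blast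
  then have "b \<in> {0..s}" by (auto simp: B_def s_def)
  then have "h (b, bv) = bv" by (rule stay[OF h s ds])
  then show False using b by (simp add: B_def)
qed

lemma hf_neg: "x \<in> hf double_broom \<Longrightarrow> - x \<in> hf double_broom"
proof -
  assume x: "x \<in> hf double_broom"
  show "- x \<in> hf double_broom" unfolding hf_alt
  proof (intro conjI allI impI ballI)
    show "- x \<in> double_broom" using x negX hf_alt by blast
    fix h t assume h: "homot h" and t: "t \<in> {0..1::real}"
    have "homot (\<lambda>q. - h (fst q, - snd q))" by (rule homot_neg[OF h])
    then have "- h (t, - x) = x" using x t unfolding hf_alt by fastforce
    then show "h (t, - x) = - x" by (metis add.inverse_inverse)
  qed
qed

theorem corollary3p3:
  shows "hf double_broom = {bv}"
proof
  show "{bv} \<subseteq> hf double_broom"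
  proof
    fix x assume "x \<in> {bv}"
    then show "x \<in> hf double_broom" unfolding hf_alt using bv_X v_fixed by blast
  qed
  show "hf double_broom \<subseteq> {bv}"
  proof
    fix x assume x: "x \<in> hf double_broom"
    then have xX: "x \<in> double_broom" unfolding hf_alt by blast
    show "x \<in> {bv}"
    proof (rule ccontr)
      assume "x \<notin> {bv}"
      then have nv: "x \<noteq> bv" by simp
      show False
      proof (cases "x \<in> broomA")
        case True then show False using A_not_hf nv x by blast
      next
        case False
        then have "- x \<in> broomA" using xX negA by (auto simp: double_broom_def)
        moreover have "- x \<noteq> bv" using nv by (metis add.inverse_inverse bv0 neg_0_equal_iff_equal)
        ultimately show False using A_not_hf hf_neg[OF x] by blast
      qed
    qed
  qed
qed

end
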